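(* For any positive semi-definite symmetric matrix $\mathbf{Z}\in\mathbb{R}^{M\times M}$, the constraint $\mathbf{Z}\succeq \boldsymbol{\Phi}\boldsymbol{\Sigma}_0\boldsymbol{\Phi}^T+\beta^{-1}\mathbf{I}$ defines a convex set with respect to the pair of variables $\mathbf{Z}$ and $\left(\sqrt{\boldsymbol{\gamma}}\otimes\sqrt{\boldsymbol{\gamma}}\right)$, for fixed correlation matrices $\mathbf{B}_i$.
   Context: Consider the noisy linear model $\mathbf{y}=\boldsymbol{\Phi}\mathbf{x}+\mathbf{n}$ with $\boldsymbol{\Phi}\in\mathbb{R}^{M\times N}$, $N=gL$, and noise $\mathbf{n}\sim\mathcal{N}(0,\beta^{-1}\mathbf{I})$ with precision $\beta>0$. The signal $\mathbf{x}$ is split into $g$ blocks $\mathbf{x}_i\in\mathbb{R}^{L}$, each with Gaussian prior $\mathcal{N}(\mathbf{0},\mathbf{G}_i\mathbf{B}_i\mathbf{G}_i)$, where $\mathbf{G}_i=\mathrm{diag}\{\sqrt{\gamma_{i1}},\dots,\sqrt{\gamma_{iL}}\}$ with variances $\gamma_{ij}\ge 0$, and $\mathbf{B}_i\in\mathbb{R}^{L\times L}$ is a positive definite intra-block correlation matrix. The prior covariance of $\mathbf{x}$ is $\boldsymbol{\Sigma}_0=\mathrm{diag}\{\mathbf{G}_1\mathbf{B}_1\mathbf{G}_1,\dots,\mathbf{G}_g\mathbf{B}_g\mathbf{G}_g\}=\tilde{\mathbf{G}}\tilde{\mathbf{B}}\tilde{\mathbf{G}}$ with $\tilde{\mathbf{G}}=\mathrm{diag}(\sqrt{\gamma_{11}},\dots,\sqrt{\gamma_{gL}})$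 and $\tilde{\mathbf{B}}=\mathrm{diag}(\mathbf{B}_1,\dots,\mathbf{B}_g)$. Here $\boldsymbol{\gamma}=(\gamma_{11},\dots,\gamma_{gL})^T$, $\sqrt{\boldsymbol{\gamma}}$ is its elementwise square root, and $\otimes$ is the Kronecker product. *)

theory Defs
  imports "HOL-Analysis.Analysis"
begin

definition sym_mat :: "real^'n^'n \<Rightarrow> bool" where
  "sym_mat A \<longleftrightarrow> transpose A = A"

definition psd :: "real^'n^'n \<Rightarrow> bool" where
  "psd A \<longleftrightarrow> sym_mat A \<and> (\<forall>x. 0 \<le> x \<bullet> (A *v x))"

definition pd :: "real^'n^'n \<Rightarrow> bool" where
  "pd A \<longleftrightarrow> sym_mat A \<and> (\<forall>x. x \<noteq> 0 \<longrightarrow> 0 < x \<bullet> (A *v x))"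

definition loewner_ge :: "real^'n^'n \<Rightarrow> real^'n^'n \<Rightarrow> bool" where
  "loewner_ge A C \<longleftrightarrow> psd (A - C)"

text \<open>Signal index set: pairs (i,j), block i, position j in the block (N = g L).
  Block-diagonal B-tilde built from the blocks B i.\<close>
definition Btilde :: "('g::finite \<Rightarrow> real^('l::finite)^'l) \<Rightarrow> real^('g \<times> 'l)^('g \<times> 'l)" where
  "Btilde B = (\<chi> a b. if fst a = fst b then B (fst a) $ snd a $ snd b else 0)"

text \<open>Prior covariance Sigma_0 = G B G, written in terms of the variable
  w = sqrt gamma (x) sqrt gamma, indexed by pairs (a,b) with w(a,b) = sqrt(gamma_a) sqrt(gamma_b):
  (Sigma_0)_{ab} = sqrt(gamma_a) Btilde_{ab} sqrt(gamma_b) = w(a,b) Btilde_{ab}.\<close>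
definition Sigma0_of_w ::
  "('g::finite \<Rightarrow> real^('l::finite)^'l) \<Rightarrow> real^(('g \<times> 'l) \<times> ('g \<times> 'l)) \<Rightarrow> real^('g \<times> 'l)^('g \<times> 'l)" where
  "Sigma0_of_w B w = (\<chi> a b. w $ (a, b) * Btilde B $ a $ b)"

definition kron_sqrt :: "real^('n::finite) \<Rightarrow> real^('n \<times> 'n)" where
  "kron_sqrt \<gamma> = (\<chi> p. sqrt (\<gamma> $ fst p) * sqrt (\<gamma> $ snd p))"

lemma Sigma0_of_kron_sqrt:
  "Sigma0_of_w B (kron_sqrt \<gamma>) =
     (\<chi> a b. sqrt (\<gamma> $ a) * Btilde B $ a $ b * sqrt (\<gamma> $ b))"
  by (simp add: Sigma0_of_w_def kron_sqrt_def vec_eq_iff)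

end

theory Submission
  imports Defs
begin

lemma psd_comb:
  fixes A C :: "real^'n^'n"
  assumes "psd A" "psd C" "0 \<le> u" "0 \<le> v"
  shows "psd (u *\<^sub>R A + v *\<^sub>R C)"
proof -
  have s: "sym_mat (u *\<^sub>R A + v *\<^sub>R C)"
    using assms unfolding psd_def sym_mat_def by (simp add: vec_eq_iff transpose_def)
  have "0 \<le> x \<bullet> ((u *\<^sub>R A + v *\<^sub>R C) *v x)" for x
  proof -
    have "x \<bullet> ((u *\<^sub>R A + v *\<^sub>R C) *v x) = u * (x \<bullet> (A *v x)) + v * (x \<bullet> (C *v x))"
      by (simp add: matrix_vector_mult_add_rdistrib scaleR_matrix_vector_assoc[symmetric] inner_add_right)
    also have "\<dots> \<ge> 0" using assms unfolding psd_def by simp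
    finally show ?thesis by simp
  qed
  with s show ?thesis unfolding psd_def by blast
qed

lemma mult_lin:
  fixes P :: "real^'a^'m" and A C :: "real^'a^'a" and Q :: "real^'m^'a"
  shows "P ** (u *\<^sub>R A + v *\<^sub>R C) ** Q = u *\<^sub>R (P ** A ** Q) + v *\<^sub>R (P ** C ** Q)"
  by (simp add: vec_eq_iff matrix_matrix_mult_def sum_distrib_left sum.distrib algebra_simps)

lemma sigma_lin:
  "Sigma0_of_w B (u *\<^sub>R w1 + v *\<^sub>R w2) = u *\<^sub>R Sigma0_of_w B w1 + v *\<^sub>R Sigma0_of_w B w2"
  by (simp add: Sigma0_of_w_def vec_eq_iff algebra_simps)

lemma aff_id:
  fixes X1 X2 M1 M2 c :: "'a::real_vector"
  assumes "u + v = 1"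
  shows "u *\<^sub>R X1 + v *\<^sub>R X2 - (u *\<^sub>R M1 + v *\<^sub>R M2 + c)
     = u *\<^sub>R (X1 - (M1 + c)) + v *\<^sub>R (X2 - (M2 + c))"
proof -
  have "c = u *\<^sub>R c + v *\<^sub>R c" using assms by (metis scaleR_add_left scaleR_one)
  then show ?thesis by (simp add: algebra_simps)
qed

theorem lemma1:
  fixes \<Phi> :: "real^('g::finite \<times> 'l::finite)^'m"
    and \<beta> :: real
    and B :: "'g \<Rightarrow> real^'l^'l"
  assumes "\<beta> > 0"
    and "\<And>i. pd (B i)"
  shows "convex {(Z :: real^'m^'m, w :: real^(('g \<times> 'l) \<times> ('g \<times> 'l))).
            psd Z \<and>
            loewner_ge Z (\<Phi> ** Sigma0_of_w B w ** transpose \<Phi> + (1 / \<beta>) *\<^sub>R mat 1)}"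
proof (rule convexI, clarsimp)
  fix Z1 w1 Z2 w2 and u v :: real
  assume h: "psd Z1" "loewner_ge Z1 (\<Phi> ** Sigma0_of_w B w1 ** transpose \<Phi> + (1 / \<beta>) *\<^sub>R mat 1)"
    "psd Z2" "loewner_ge Z2 (\<Phi> ** Sigma0_of_w B w2 ** transpose \<Phi> + (1 / \<beta>) *\<^sub>R mat 1)"
    "0 \<le> u" "0 \<le> v" "u + v = 1"
  let ?c = "(1 / \<beta>) *\<^sub>R (mat 1 :: real^'m^'m)"
  have "u *\<^sub>R Z1 + v *\<^sub>R Z2 - (\<Phi> ** Sigma0_of_w B (u *\<^sub>R w1 + v *\<^sub>R w2) ** transpose \<Phi> + ?c)
     = u *\<^sub>R (Z1 - (\<Phi> ** Sigma0_of_w B w1 ** transpose \<Phi> + ?c))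
       + v *\<^sub>R (Z2 - (\<Phi> ** Sigma0_of_w B w2 ** transpose \<Phi> + ?c))"
    unfolding sigma_lin mult_lin by (rule aff_id[OF h(7)])
  then show "psd (u *\<^sub>R Z1 + v *\<^sub>R Z2) \<and>
    loewner_ge (u *\<^sub>R Z1 + v *\<^sub>R Z2) (\<Phi> ** Sigma0_of_w B (u *\<^sub>R w1 + v *\<^sub>R w2) ** transpose \<Phi> + ?c)"
    using h psd_comb unfolding loewner_ge_def by metis
qed

end
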